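(* Let $X$ be a sufficiently large real number, $P=\lfloor 5X\rfloor$, and $f(\alpha)=\sum_{1\le m\le X}e(m^2\alpha)$. For integers $q\ge1$, $a$, $n$ let $S(q,a,n)=\sum_{x=1}^q e\big(\frac{ax^2+nx}{q}\big)$ and $S(q,a)=S(q,a,0)$. Suppose that $(a,q)=1$, $q\le P$ and $|\beta|\le \frac{1}{qP}$. Then there are complex numbers $E(b,q,\beta)$ (for integers $-3q/2<b\le 3q/2$, not depending on $a$) such that $$f\Big(\frac{a}{q}+\beta\Big)=\frac{S(q,a)}{q}\int_0^Xe(x^2\beta)\,dx+\sum_{-3q/2<b\le 3q/2}S(q,a,b)E(b,q,\beta)$$ and $$\sum_{-3q/2<b\le 3q/2}|E(b,q,\beta)|\ll \log (q+2),$$ with an absolute implied constant.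
   Context: $e(z)=e^{2\pi i z}$; $\lfloor x\rfloor$ is the greatest integer not exceeding $x$. *)

theory Defs
  imports "HOL-Analysis.Analysis"
begin

definition e :: "real \<Rightarrow> complex" where
  "e z = exp (2 * complex_of_real pi * \<i> * complex_of_real z)"

definition weylf :: "real \<Rightarrow> real \<Rightarrow> complex" where
  "weylf X \<alpha> = (\<Sum>m\<in>{1..\<lfloor>X\<rfloor>}. e (of_int (m^2) * \<alpha>))"

definition S :: "int \<Rightarrow> int \<Rightarrow> int \<Rightarrow> complex" where
  "S q a n = (\<Sum>x\<in>{1..q}. e (of_int (a * x^2 + n * x) / of_int q))"

definition brange :: "int \<Rightarrow> int set" where
  "brange q = {b. - 3 * q < 2 * b \<and> 2 * b \<le> 3 * q}"

end

theory Submission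
  imports Defs
begin

lemma e_alt: "e x = exp (\<i> * complex_of_real (2*pi*x))"
  unfolding e_def by (simp add: ac_simps)

lemma e_add: "e (x + y) = e x * e y"
  unfolding e_def by (simp add: distrib_left exp_add)

lemma e_diff: "e (x - y) = e x / e y"
  unfolding e_def by (simp add: right_diff_distrib exp_diff)

lemma norm_e [simp]: "norm (e x) = 1"
  unfolding e_alt by (rule norm_exp_i_times)

lemma e_nz [simp]: "e x \<noteq> 0"
  unfolding e_def by simp

lemma e_int: "e (of_int n) = 1"
proof -
  have "exp (2 * complex_of_real pi * \<i> * complex_of_real (of_int n)) = 1"
    by (subst exp_eq_1) (auto intro!: exI[of _ n] simp: ac_simps)
  thus ?thesis by (simp add: e_def)
qed

lemma e_per: "e (x + of_int n) = e x"
  by (simp add: e_add e_int)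

lemma e_eq_1_imp: "e x = 1 \<Longrightarrow> x \<in> \<int>"
proof -
  assume "e x = 1"
  then obtain n::int where "2*pi*x = of_int (2*n) * pi"
    unfolding e_def exp_eq_1 by auto
  then have "x = of_int n" by (simp add: algebra_simps)
  thus ?thesis by simp
qed

lemma e_nat_mult: "e (of_nat n * x) = e x ^ n"
proof -
  have "e (of_nat n * x) = exp (of_nat n * (2 * complex_of_real pi * \<i> * complex_of_real x))"
    unfolding e_def by (simp add: ac_simps)
  thus ?thesis by (simp add: exp_of_nat_mult e_def)
qed

lemma geom_e:
  fixes q k :: int assumes q: "q \<ge> 1"
  shows "(\<Sum>b\<in>{0..q-1}. e (of_int (b*k) / of_int q)) = (if q dvd k then of_int q else 0)"
proof -
  have img: "{0..q-1} = int ` {..<nat q}" using q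
    apply (auto simp: image_iff)
    subgoal for x by (rule bexI[of _ "nat x"]) auto
    done
  have "(\<Sum>b\<in>{0..q-1}. e (of_int (b*k) / of_int q)) = (\<Sum>j<nat q. e (of_int (int j*k) / of_int q))"
    unfolding img by (subst sum.reindex) (auto simp: inj_on_def)
  also have "\<dots> = (\<Sum>j<nat q. e (of_int k / of_int q) ^ j)"
    by (intro sum.cong refl) (simp flip: e_nat_mult add: field_simps)
  finally have eq: "(\<Sum>b\<in>{0..q-1}. e (of_int (b*k) / of_int q)) = (\<Sum>j<nat q. e (of_int k / of_int q) ^ j)" .
  show ?thesis
  proof (cases "q dvd k")
    case True
    then obtain t where "k = q*t" by auto
    hence "e (of_int k / of_int q) = 1" using q by (simp add: e_int)
    thus ?thesis using eq True q by simp
  next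
    case False
    have ne: "e (of_int k / of_int q) \<noteq> 1"
    proof
      assume "e (of_int k / of_int q) = 1"
      then obtain t where t: "of_int k / of_int q = (of_int t :: real)"
        using e_eq_1_imp Ints_cases by metis
      hence "k = q * t" using q by (simp add: field_simps flip: of_int_mult)
      thus False using False by auto
    qed
    have "e (of_int k / of_int q) ^ nat q = e (of_nat (nat q) * (of_int k / of_int q))"
      by (simp only: e_nat_mult)
    also have "\<dots> = 1" using q by (simp add: e_int)
    finally have "e (of_int k / of_int q) ^ nat q = 1" .
    thus ?thesis using eq False ne by (simp add: sum_gp_strict)
  qed
qed


lemma dvd_iff_x0:
  fixes q m x :: int assumes q: "q \<ge> 1" and x: "x \<in> {1..q}"
  shows "q dvd (x - m) \<longleftrightarrow> x = (m - 1) mod q + 1"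
proof -
  have "q dvd (x - m) \<longleftrightarrow> (x - 1) mod q = (m - 1) mod q"
    by (metis diff_diff_eq2 diff_diff_left mod_eq_dvd_iff add.commute diff_add_cancel)
  also have "(x - 1) mod q = x - 1" using x by (intro mod_pos_pos_trivial) auto
  finally show ?thesis by auto
qed

lemma fourier:
  fixes q a m :: int assumes q: "q \<ge> 1"
  shows "(\<Sum>b\<in>{0..q-1}. S q a b * e (- of_int (b*m) / of_int q)) = of_int q * e (of_int (a*m^2) / of_int q)"
proof -
  define x0 where "x0 = (m - 1) mod q + 1"
  have x0: "x0 \<in> {1..q}" using q unfolding x0_def using pos_mod_bound[of q "m - 1"] by (auto simp del: pos_mod_bound)
  have "(\<Sum>b\<in>{0..q-1}. S q a b * e (- of_int (b*m) / of_int q))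
      = (\<Sum>b\<in>{0..q-1}. \<Sum>x\<in>{1..q}. e (of_int (a*x^2) / of_int q) * e (of_int (b*(x-m)) / of_int q))"
    unfolding S_def sum_distrib_right
  proof (intro sum.cong refl)
    fix b x assume "x \<in> {1..q}"
    have "(of_int (a * x\<^sup>2 + b * x) / of_int q) + (- of_int (b * m) / of_int q)
       = of_int (a*x^2) / of_int q + (of_int (b*(x-m)) / of_int q :: real)"
      using q by (simp add: field_simps algebra_simps)
    thus "e (of_int (a * x\<^sup>2 + b * x) / of_int q) * e (- of_int (b * m) / of_int q) =
          e (of_int (a*x^2) / of_int q) * e (of_int (b*(x-m)) / of_int q)"
      by (simp flip: e_add)
  qed
  also have "\<dots> = (\<Sum>x\<in>{1..q}. e (of_int (a*x^2) / of_int q) * (\<Sum>b\<in>{0..q-1}. e (of_int (b*(x-m)) / of_int q)))"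
    by (subst sum.swap) (simp add: sum_distrib_left)
  also have "\<dots> = (\<Sum>x\<in>{1..q}. if x = x0 then e (of_int (a*x0^2) / of_int q) * of_int q else 0)"
  proof (intro sum.cong refl)
    fix x assume x: "x \<in> {1..q}"
    have "(\<Sum>b\<in>{0..q-1}. e (of_int (b*(x-m)) / of_int q)) = (if x = x0 then of_int q else 0)"
      using geom_e[OF q, of "x-m"] dvd_iff_x0[OF q x, of m] unfolding x0_def by simp
    thus "e (of_int (a*x^2) / of_int q) * (\<Sum>b\<in>{0..q-1}. e (of_int (b*(x-m)) / of_int q)) =
      (if x = x0 then e (of_int (a*x0^2) / of_int q) * of_int q else 0)" by simp
  qed
  also have "\<dots> = e (of_int (a*x0^2) / of_int q) * of_int q"
    using x0 by simp
  also have "e (of_int (a*x0^2) / of_int q) = e (of_int (a*m^2) / of_int q)"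
  proof -
    have "q dvd (x0 - m)" using dvd_iff_x0[OF q x0, of m] x0_def by simp
    then obtain t where t: "x0 = m + q*t" by (metis add_diff_cancel_left' dvd_def add.commute diff_add_cancel)
    have "a*x0^2 = a*m^2 + q*(a*(2*m*t + q*t^2))" unfolding t by (simp add: power2_eq_square algebra_simps)
    hence "of_int (a*x0^2) / of_int q = of_int (a*m^2) / of_int q + (of_int (a*(2*m*t + q*t^2)) :: real)"
      using q by (simp add: field_simps)
    thus ?thesis by (simp only: e_per)
  qed
  finally show ?thesis by simp
qed


lemma abel_id:
  fixes h c :: "nat \<Rightarrow> complex"
  shows "(\<Sum>m<Suc n. (h (Suc m) - h m) * c m) =
     h (Suc n) * c n - h 0 * c 0 - (\<Sum>m\<in>{1..n}. h m * (c m - c (m-1)))"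
proof (induction n)
  case 0 then show ?case by (simp add: algebra_simps)
next
  case (Suc n)
  have "(\<Sum>m\<in>{1..Suc n}. h m * (c m - c (m-1))) = (\<Sum>m\<in>{1..n}. h m * (c m - c (m-1))) + h (Suc n) * (c (Suc n) - c n)"
    by simp
  then show ?case using Suc by (simp add: algebra_simps)
qed

lemma var_mono:
  fixes r :: "nat \<Rightarrow> real"
  assumes "\<forall>m. Suc m \<le> n \<longrightarrow> r m \<le> r (Suc m)"
  shows "(\<Sum>m\<in>{1..n}. \<bar>r m - r (m-1)\<bar>) = r n - r 0"
  using assms
proof (induction n)
  case 0 then show ?case by simp
next
  case (Suc n)
  have "(\<Sum>m\<in>{1..Suc n}. \<bar>r m - r (m-1)\<bar>) = (\<Sum>m\<in>{1..n}. \<bar>r m - r (m-1)\<bar>) + \<bar>r (Suc n) - r n\<bar>"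
    by simp
  then show ?case using Suc by auto
qed

lemma var_bound:
  fixes r :: "nat \<Rightarrow> real"
  assumes "(\<forall>m. Suc m \<le> n \<longrightarrow> r m \<le> r (Suc m)) \<or> (\<forall>m. Suc m \<le> n \<longrightarrow> r (Suc m) \<le> r m)"
  shows "(\<Sum>m\<in>{1..n}. \<bar>r m - r (m-1)\<bar>) \<le> \<bar>r n\<bar> + \<bar>r 0\<bar>"
  using assms
proof
  assume "\<forall>m. Suc m \<le> n \<longrightarrow> r m \<le> r (Suc m)"
  thus ?thesis using var_mono[of n r] by simp
next
  assume "\<forall>m. Suc m \<le> n \<longrightarrow> r (Suc m) \<le> r m"
  hence "(\<Sum>m\<in>{1..n}. \<bar>(- r) m - (- r) (m-1)\<bar>) = (- r) n - (- r) 0"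
    by (intro var_mono) auto
  thus ?thesis by (simp add: abs_minus_commute)
qed

lemma abel_bound:
  fixes h :: "nat \<Rightarrow> complex" and r :: "nat \<Rightarrow> real"
  assumes h: "\<And>m. m \<le> n \<Longrightarrow> norm (h m) \<le> 1"
    and r: "\<And>m. m < n \<Longrightarrow> \<bar>r m\<bar> \<le> K" and K: "0 \<le> K"
    and mono: "(\<forall>m. Suc m < n \<longrightarrow> r m \<le> r (Suc m)) \<or> (\<forall>m. Suc m < n \<longrightarrow> r (Suc m) \<le> r m)"
  shows "norm (\<Sum>m<n. (h (Suc m) - h m) * (- 1/2 - \<i>/2 * of_real (r m))) \<le> 1 + 2*K"
proof (cases n)
  case 0 then show ?thesis using K by simp
next
  case (Suc k)
  define c where "c m = (- 1/2 - \<i>/2 * of_real (r m) :: complex)" for m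
  have cb: "norm (c m) \<le> 1/2 + K/2" if "m \<le> k" for m
  proof -
    have "norm (c m) \<le> norm (-1/2 :: complex) + norm (\<i>/2 * of_real (r m))"
      unfolding c_def by (rule norm_triangle_ineq4)
    also have "\<dots> = 1/2 + \<bar>r m\<bar>/2" by (simp add: norm_mult)
    also have "\<dots> \<le> 1/2 + K/2" using r[of m] that Suc by simp
    finally show ?thesis .
  qed
  have cd: "norm (c m - c (m-1)) = \<bar>r m - r (m-1)\<bar> / 2" for m
  proof -
    have "c m - c (m-1) = - \<i>/2 * of_real (r m - r (m-1))" unfolding c_def by (simp add: algebra_simps)
    thus ?thesis by (simp add: norm_mult flip: of_real_diff)
  qed
  have eq: "(\<Sum>m<n. (h (Suc m) - h m) * c m) = h (Suc k) * c k - h 0 * c 0 - (\<Sum>m\<in>{1..k}. h m * (c m - c (m-1)))"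
    unfolding Suc by (rule abel_id)
  have n1: "norm (h (Suc k) * c k) \<le> 1/2 + K/2"
  proof -
    have "norm (h (Suc k)) * norm (c k) \<le> 1 * (1/2 + K/2)"
      by (rule mult_mono) (use h[of "Suc k"] cb[of k] Suc in auto)
    thus ?thesis by (simp add: norm_mult)
  qed
  have n2: "norm (h 0 * c 0) \<le> 1/2 + K/2"
  proof -
    have "norm (h 0) * norm (c 0) \<le> 1 * (1/2 + K/2)"
      by (rule mult_mono) (use h[of 0] cb[of 0] Suc in auto)
    thus ?thesis by (simp add: norm_mult)
  qed
  have "norm (\<Sum>m\<in>{1..k}. h m * (c m - c (m-1))) \<le> (\<Sum>m\<in>{1..k}. norm (h m * (c m - c (m-1))))"
    by (rule norm_sum)
  also have "\<dots> \<le> (\<Sum>m\<in>{1..k}. \<bar>r m - r (m-1)\<bar> / 2)"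
  proof (intro sum_mono)
    fix m assume "m \<in> {1..k}"
    hence "norm (h m) \<le> 1" using h Suc by auto
    thus "norm (h m * (c m - c (m-1))) \<le> \<bar>r m - r (m-1)\<bar> / 2"
    proof -
      have "norm (h m) * norm (c m - c (m-1)) \<le> 1 * norm (c m - c (m-1))"
        by (rule mult_right_mono) (use \<open>norm (h m) \<le> 1\<close> in auto)
      thus ?thesis using cd[of m] by (simp only: norm_mult)
    qed
  qed
  also have "\<dots> = (\<Sum>m\<in>{1..k}. \<bar>r m - r (m-1)\<bar>) / 2" by (simp add: sum_divide_distrib)
  also have "\<dots> \<le> (\<bar>r k\<bar> + \<bar>r 0\<bar>) / 2"
    using var_bound[of k r] mono Suc by auto
  also have "\<dots> \<le> K" using r[of k] r[of 0] Suc by simp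
  finally have n3: "norm (\<Sum>m\<in>{1..k}. h m * (c m - c (m-1))) \<le> K" .
  have "norm (\<Sum>m<n. (h (Suc m) - h m) * c m) \<le> 1 + 2*K"
  proof -
    have "norm (h (Suc k) * c k - h 0 * c 0 - (\<Sum>m\<in>{1..k}. h m * (c m - c (m-1))))
       \<le> norm (h (Suc k) * c k - h 0 * c 0) + norm (\<Sum>m\<in>{1..k}. h m * (c m - c (m-1)))"
      by (rule norm_triangle_ineq4)
    also have "\<dots> \<le> norm (h (Suc k) * c k) + norm (h 0 * c 0) + norm (\<Sum>m\<in>{1..k}. h m * (c m - c (m-1)))"
      using norm_triangle_ineq4 by (intro add_right_mono) blast
    finally show ?thesis unfolding eq using n1 n2 n3 by linarith
  qed
  thus ?thesis unfolding c_def .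
qed


lemma e_cis: "e t = Complex (cos (2*pi*t)) (sin (2*pi*t))"
  unfolding e_alt by (subst cis_conv_exp[symmetric]) (simp add: complex_eq_iff)

lemma recip_e:
  assumes "sin (pi*t) \<noteq> 0"
  shows "1 / (e t - 1) = - 1/2 - \<i>/2 * of_real (cot (pi*t))"
proof -
  define x where "x = pi*t"
  have 2: "2*pi*t = 2*x" unfolding x_def by simp
  have sx: "sin x \<noteq> 0" using assms x_def by simp
  have "(e t - 1) * (- 1/2 - \<i>/2 * of_real (cot x)) = 1"
  proof -
    have h: "cos x * cos x = 1 - sin x * sin x" using sin_cos_squared_add3[of x] by linarith
    have h2: "cos x * (cos x * sin x) + sin x * (sin x * sin x) = sin x"
    proof -
      have "cos x * (cos x * sin x) + sin x * (sin x * sin x) = sin x * (cos x * cos x + sin x * sin x)"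
        by algebra
      also have "\<dots> = sin x" by (simp only: sin_cos_squared_add3 mult_1_right)
      finally show ?thesis .
    qed
    show ?thesis unfolding e_cis 2 cos_double sin_double cot_def
      using sx by (simp add: complex_eq_iff field_simps power2_eq_square, simp add: algebra_simps h h2)
  qed
  hence "inverse (e t - 1) = - 1/2 - \<i>/2 * of_real (cot x)" by (rule inverse_unique)
  thus ?thesis unfolding x_def by (simp add: inverse_eq_divide)
qed

lemma cot_anti_pos:
  assumes "0 < x" "x \<le> y" "y < pi"
  shows "cot y \<le> cot x"
proof -
  have sx: "sin x > 0" "sin y > 0" using assms by (auto intro!: sin_gt_zero)
  have "cot x - cot y = sin (y - x) / (sin x * sin y)"
    unfolding cot_def sin_diff using sx by (simp add: field_simps)
  moreover have "sin (y - x) \<ge> 0" using assms by (intro sin_ge_zero) auto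
  ultimately have "cot x - cot y \<ge> 0" using sx by simp
  thus ?thesis by simp
qed

lemma cot_anti_neg:
  assumes "-pi < x" "x \<le> y" "y < 0"
  shows "cot y \<le> cot x"
  using cot_anti_pos[of "-y" "-x"] assms by (simp add: cot_def)

lemma xcos_le_sin:
  assumes "0 \<le> x" "x \<le> pi"
  shows "x * cos x \<le> sin x"
proof -
  have "(\<lambda>t. sin t - t * cos t) 0 \<le> (\<lambda>t. sin t - t * cos t) x"
  proof (rule DERIV_nonneg_imp_increasing_open[OF assms(1)])
    fix t assume t: "0 < t" "t < x"
    have "DERIV (\<lambda>t. sin t - t * cos t) t :> (cos t - (cos t + t * (- sin t)))"
      by (auto intro!: derivative_eq_intros)
    moreover have "0 \<le> cos t - (cos t + t * (- sin t))" using t assms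
      by (simp add: sin_ge_zero)
    ultimately show "\<exists>y. DERIV (\<lambda>t. sin t - t * cos t) t :> y \<and> 0 \<le> y" by blast
  qed (intro continuous_intros)
  thus ?thesis by simp
qed

definition phi :: "real \<Rightarrow> real" where "phi x = cot x - 1/x"

lemma phi_anti_pos:
  assumes "0 < x" "x \<le> y" "y < pi"
  shows "phi y \<le> phi x"
proof -
  have "phi x \<ge> phi y"
  proof (rule DERIV_nonpos_imp_decreasing_open[OF assms(2)])
    fix t assume t: "x < t" "t < y"
    have st: "sin t > 0" using t assms by (intro sin_gt_zero) auto
    have tp: "t > 0" using t assms by simp
    have "DERIV phi t :> (- inverse ((sin t)\<^sup>2) + inverse (t^2))"
    proof -
      have d1: "DERIV cot t :> - inverse ((sin t)\<^sup>2)" using st by simp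
      have d2: "DERIV (\<lambda>t. 1/t) t :> - inverse (t^2)" using tp
        by (auto intro!: derivative_eq_intros simp: power2_eq_square field_simps)
      show ?thesis unfolding phi_def using DERIV_diff[OF d1 d2] by simp
    qed
    moreover have "(sin t)^2 \<le> t^2" using abs_sin_x_le_abs_x[of t]
      by (metis abs_ge_zero power2_abs power_mono)
    hence "- inverse ((sin t)\<^sup>2) + inverse (t^2) \<le> 0" using st tp
      by (simp add: le_imp_inverse_le)
    ultimately show "\<exists>z. DERIV phi t :> z \<and> z \<le> 0" by blast
  next
    have "\<forall>t\<in>{x..y}. sin t \<noteq> 0 \<and> t \<noteq> 0" using assms
      by (auto, metis sin_gt_zero less_irrefl order_less_le_trans order_le_less_trans)
    thus "continuous_on {x..y} phi" unfolding phi_def cot_def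
      by (auto intro!: continuous_intros)
  qed
  thus ?thesis .
qed

lemma phi_odd: "phi (-x) = - phi x"
  unfolding phi_def cot_def by simp

lemma phi_anti_neg:
  assumes "-pi < x" "x \<le> y" "y < 0"
  shows "phi y \<le> phi x"
  using phi_anti_pos[of "-y" "-x"] assms by (simp add: phi_odd)

lemma phi_bound_pos:
  assumes "0 < x" "x \<le> pi/2"
  shows "\<bar>phi x\<bar> \<le> 1"
proof -
  have sx: "sin x > 0" using assms by (intro sin_gt_zero) auto
  have "x * cos x \<le> sin x" using assms by (intro xcos_le_sin) auto
  hence "cot x \<le> 1/x" unfolding cot_def using sx assms by (simp add: field_simps)
  hence a: "phi x \<le> 0" unfolding phi_def by simp
  have "phi (pi/2) \<le> phi x" using assms by (intro phi_anti_pos) auto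
  moreover have "phi (pi/2) = - 2/pi" unfolding phi_def cot_def by simp
  moreover have "2/pi \<le> 1" using pi_gt3 by simp
  ultimately show ?thesis using a by linarith
qed

lemma phi_bound:
  assumes "x \<noteq> 0" "\<bar>x\<bar> \<le> pi/2"
  shows "\<bar>phi x\<bar> \<le> 1"
proof (cases "x > 0")
  case True thus ?thesis using assms phi_bound_pos by auto
next
  case False thus ?thesis using assms phi_bound_pos[of "-x"] by (simp add: phi_odd)
qed

lemma cot_bound_pos:
  assumes "0 < y" "y < pi"
  shows "\<bar>cot y\<bar> \<le> 1 / min y (pi - y)"
proof (cases "y \<le> pi/2")
  case True
  have sx: "sin y > 0" using assms by (intro sin_gt_zero) auto
  have "y * cos y \<le> sin y" using assms by (intro xcos_le_sin) auto
  hence "cot y \<le> 1/y" unfolding cot_def using sx assms by (simp add: field_simps)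
  moreover have "cot y \<ge> 0" unfolding cot_def using sx True assms by (simp add: cos_ge_zero)
  moreover have "min y (pi - y) = y" using True by simp
  ultimately show ?thesis by simp
next
  case False
  define z where "z = pi - y"
  have z: "0 < z" "z < pi/2" using False assms z_def by auto
  have sx: "sin z > 0" using z by (intro sin_gt_zero) auto
  have "z * cos z \<le> sin z" using z by (intro xcos_le_sin) auto
  hence "cot z \<le> 1/z" unfolding cot_def using sx z by (simp add: field_simps)
  moreover have "cot z \<ge> 0" unfolding cot_def using sx z by (simp add: cos_ge_zero)
  moreover have "cot y = - cot z" unfolding z_def cot_def by simp
  moreover have "min y (pi - y) = z" using False z_def by simp
  ultimately show ?thesis by simp
qed


lemma kl_step:
  fixes h :: "nat \<Rightarrow> complex"
  assumes "h (Suc m) = h m * e th" "sin (pi*th) \<noteq> 0"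
  shows "h m = (h (Suc m) - h m) * (- 1/2 - \<i>/2 * of_real (cot (pi*th)))"
proof -
  have "h (Suc m) - h m = h m * (e th - 1)" using assms(1) by (simp add: algebra_simps)
  moreover have "e th - 1 \<noteq> 0"
  proof
    assume "e th - 1 = 0"
    hence "th \<in> \<int>" using e_eq_1_imp by simp
    then obtain n where "th = of_int n" by (auto elim: Ints_cases)
    hence "sin (pi*th) = 0" by (simp add: sin_zero_iff_int2)
    thus False using assms by simp
  qed
  ultimately show ?thesis using recip_e[OF assms(2)]
    by (metis (no_types, lifting) divide_self_if mult.assoc mult_1_right times_divide_eq_right)
qed

lemma sumA:
  fixes q b :: int and \<beta> :: real and N :: nat
  assumes b: "1 \<le> b" "b \<le> q - 1" and small: "2 * real N * \<bar>\<beta>\<bar> \<le> 1 / (2 * of_int q)"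
  shows "norm (\<Sum>m<N. e (\<beta> * (real m)^2 - of_int b * real m / of_int q))
     \<le> 1 + 2 * (of_int q / of_int (min b (q - b)))"
proof -
  define Q where "Q = (of_int q :: real)"
  define B where "B = (of_int b :: real)"
  define M where "M = (of_int (min b (q - b)) :: real)"
  have Qp: "Q \<ge> 2" using b unfolding Q_def by linarith
  have B1: "1 \<le> B" "B \<le> Q - 1" using b unfolding B_def Q_def by linarith+
  have Mdef: "M = min B (Q - B)" unfolding M_def B_def Q_def by simp
  have M1: "1 \<le> M" using B1 Mdef by simp
  define h where "h m = e (\<beta> * (real m)^2 - B * real m / Q)" for m
  define th where "th m = \<beta> * (2 * real m + 1) - B / Q" for m
  have hs: "h (Suc m) = h m * e (th m)" for m
  proof -
    have "\<beta> * (real (Suc m))^2 - B * real (Suc m) / Q = (\<beta> * (real m)^2 - B * real m / Q) + th m"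
      unfolding th_def using Qp by (simp add: field_simps power2_eq_square)
    thus ?thesis unfolding h_def by (simp add: e_add)
  qed
  have thr: "- (B + 1/2) / Q \<le> th m \<and> th m \<le> - (B - 1/2) / Q" if "m < N" for m
  proof -
    have "\<bar>\<beta> * (2 * real m + 1)\<bar> \<le> 2 * real N * \<bar>\<beta>\<bar>"
    proof -
      have "real m + 1 \<le> real N" using that by linarith
      hence "\<bar>\<beta>\<bar> * (2 * real m + 1) \<le> \<bar>\<beta>\<bar> * (2 * real N)" by (intro mult_left_mono) auto
      thus ?thesis by (simp add: abs_mult ac_simps)
    qed
    hence u: "\<bar>\<beta> * (2 * real m + 1)\<bar> \<le> 1/(2*Q)" using small unfolding Q_def by linarith
    have e1: "- (B + 1/2) / Q = - B/Q - 1/(2*Q)" and e2: "- (B - 1/2) / Q = - B/Q + 1/(2*Q)"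
      using Qp by (simp_all add: field_simps)
    have "- (1/(2*Q)) \<le> \<beta> * (2 * real m + 1)" "\<beta> * (2 * real m + 1) \<le> 1/(2*Q)"
      using u by (auto simp only: abs_le_iff)
    thus ?thesis unfolding th_def e1 e2 by linarith
  qed
  define y where "y m = - pi * th m" for m
  have yr: "pi * M / (2*Q) \<le> y m \<and> pi * M / (2*Q) \<le> pi - y m" if "m < N" for m
  proof -
    have t: "- (B + 1/2) / Q \<le> th m" "th m \<le> - (B - 1/2) / Q" using thr[OF that] by auto
    have "M / (2*Q) \<le> (B - 1/2) / Q" using Mdef B1 Qp by (simp add: field_simps)
    hence a: "M / (2*Q) \<le> - th m" using t by linarith
    have "M / (2*Q) \<le> 1 - (B + 1/2) / Q" using Mdef B1 Qp by (simp add: field_simps)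
    hence b': "M / (2*Q) \<le> 1 + th m" using t by linarith
    show ?thesis unfolding y_def using mult_left_mono[OF a, of pi] mult_left_mono[OF b', of pi]
      by (simp add: algebra_simps)
  qed
  have ypos: "0 < y m \<and> y m < pi" if "m < N" for m
  proof -
    have "0 < pi * M / (2*Q)" using M1 Qp by simp
    thus ?thesis using yr[OF that] by linarith
  qed
  have cotb: "\<bar>cot (pi * th m)\<bar> \<le> Q / M" if "m < N" for m
  proof -
    have "cot (pi * th m) = - cot (y m)" unfolding y_def cot_def by simp
    hence "\<bar>cot (pi * th m)\<bar> \<le> 1 / min (y m) (pi - y m)" using cot_bound_pos ypos[OF that] by simp
    also have "\<dots> \<le> 1 / (pi * M / (2*Q))"
    proof (rule divide_left_mono)
      have p: "0 < pi * M / (2*Q)" using M1 Qp by simp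
      show "pi * M / (2*Q) \<le> min (y m) (pi - y m)" using yr[OF that] by simp
      have "0 < min (y m) (pi - y m)" using yr[OF that] p by linarith
      thus "0 < min (y m) (pi - y m) * (pi * M / (2*Q))" using p by (rule mult_pos_pos)
    qed simp
    also have "\<dots> = (2/pi) * (Q / M)" by (simp add: field_simps)
    also have "\<dots> \<le> 1 * (Q / M)" using pi_gt3 M1 Qp by (intro mult_right_mono) auto
    finally show ?thesis by simp
  qed
  have sne: "sin (pi * th m) \<noteq> 0" if "m < N" for m
  proof -
    have "sin (y m) > 0" using ypos[OF that] by (intro sin_gt_zero) auto
    thus ?thesis unfolding y_def by simp
  qed
  have mono: "(\<forall>m. Suc m < N \<longrightarrow> cot (pi * th m) \<le> cot (pi * th (Suc m))) \<or>
              (\<forall>m. Suc m < N \<longrightarrow> cot (pi * th (Suc m)) \<le> cot (pi * th m))"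
  proof (cases "\<beta> \<ge> 0")
    case True
    have "cot (pi * th (Suc m)) \<le> cot (pi * th m)" if "Suc m < N" for m
    proof (rule cot_anti_neg)
      show "- pi < pi * th m" using ypos[of m] that unfolding y_def by simp
      show "pi * th m \<le> pi * th (Suc m)" unfolding th_def using True by (simp add: mult_left_mono)
      show "pi * th (Suc m) < 0" using ypos[of "Suc m"] that unfolding y_def by simp
    qed
    thus ?thesis by blast
  next
    case False
    have "cot (pi * th m) \<le> cot (pi * th (Suc m))" if "Suc m < N" for m
    proof (rule cot_anti_neg)
      show "- pi < pi * th (Suc m)" using ypos[of "Suc m"] that unfolding y_def by simp
      show "pi * th (Suc m) \<le> pi * th m" unfolding th_def using False by (simp add: mult_left_mono_neg)
      show "pi * th m < 0" using ypos[of m] that unfolding y_def by simp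
    qed
    thus ?thesis by blast
  qed
  have "(\<Sum>m<N. h m) = (\<Sum>m<N. (h (Suc m) - h m) * (- 1/2 - \<i>/2 * of_real (cot (pi * th m))))"
    by (intro sum.cong refl kl_step hs sne) simp
  also have "norm \<dots> \<le> 1 + 2 * (Q / M)"
    by (rule abel_bound) (use cotb mono M1 Qp in \<open>auto simp: h_def\<close>)
  finally show ?thesis unfolding h_def Q_def B_def M_def .
qed


lemma sumB:
  fixes \<beta> :: real and N :: nat
  assumes b0: "\<beta> \<noteq> 0" and small: "2 * real N * \<bar>\<beta>\<bar> \<le> 1/2"
  shows "norm ((\<Sum>m<N. e (\<beta> * (real m)^2)) -
     (\<Sum>m<N. (e (\<beta> * (real (Suc m))^2) - e (\<beta> * (real m)^2)) / (2 * of_real pi * \<i> * of_real (\<beta> * (2 * real m + 1))))) \<le> 3"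
proof -
  define h where "h m = e (\<beta> * (real m)^2)" for m
  define th where "th m = \<beta> * (2 * real m + 1)" for m
  have hs: "h (Suc m) = h m * e (th m)" for m
  proof -
    have "\<beta> * (real (Suc m))^2 = \<beta> * (real m)^2 + th m"
      unfolding th_def by (simp add: field_simps power2_eq_square)
    thus ?thesis unfolding h_def by (simp add: e_add)
  qed
  have thb: "\<bar>pi * th m\<bar> \<le> pi/2" if "m < N" for m
  proof -
    have "real m + 1 \<le> real N" using that by linarith
    hence "\<bar>\<beta>\<bar> * (2 * real m + 1) \<le> \<bar>\<beta>\<bar> * (2 * real N)" by (intro mult_left_mono) auto
    moreover have "\<bar>th m\<bar> = \<bar>\<beta>\<bar> * (2 * real m + 1)" unfolding th_def by (simp add: abs_mult)
    moreover have "\<bar>\<beta>\<bar> * (2 * real N) = 2 * real N * \<bar>\<beta>\<bar>" by simp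
    ultimately have "\<bar>th m\<bar> \<le> 1/2" using small by linarith
    hence "pi * \<bar>th m\<bar> \<le> pi * (1/2)" by (intro mult_left_mono) auto
    thus ?thesis by (simp add: abs_mult)
  qed
  have thnz: "pi * th m \<noteq> 0" for m
  proof -
    have "2 * real m + 1 > 0" by simp
    thus ?thesis unfolding th_def using b0 by simp
  qed
  have sne: "sin (pi * th m) \<noteq> 0" if "m < N" for m
  proof -
    have "0 < \<bar>pi * th m\<bar>" "\<bar>pi * th m\<bar> < pi" using thb[OF that] thnz[of m] pi_gt_zero by linarith+
    hence "sin \<bar>pi * th m\<bar> > 0" by (intro sin_gt_zero)
    thus ?thesis by (cases "pi * th m \<ge> 0") (auto simp: abs_if)
  qed
  have key: "h m - (h (Suc m) - h m) / (2 * of_real pi * \<i> * of_real (th m))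
     = (h (Suc m) - h m) * (- 1/2 - \<i>/2 * of_real (phi (pi * th m)))" if "m < N" for m
  proof -
    have hm: "h m = (h (Suc m) - h m) * (- 1/2 - \<i>/2 * of_real (cot (pi * th m)))"
      by (rule kl_step[OF hs sne[OF that]])
    moreover have "th m \<noteq> 0" using thnz[of m] by auto
    ultimately have tnz: "complex_of_real (pi * th m) \<noteq> 0" by simp
    define A where "A = h (Suc m) - h m"
    define c where "c = cot (pi * th m)"
    have 1: "A / (2 * of_real pi * \<i> * of_real (th m)) = - (A * \<i>) / (2 * of_real (pi * th m))"
      using tnz by (simp add: field_simps)
    have 2: "A * (- 1/2 - \<i>/2 * of_real (c - 1 / (pi * th m))) = A * (- 1/2 - \<i>/2 * of_real c) + (A * \<i>) / (2 * of_real (pi * th m))"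
      using tnz by (simp add: field_simps of_real_diff)
    show ?thesis unfolding phi_def using hm
      unfolding A_def[symmetric] c_def[symmetric] 1 2 by simp
  qed
  have mono: "(\<forall>m. Suc m < N \<longrightarrow> phi (pi * th m) \<le> phi (pi * th (Suc m))) \<or>
              (\<forall>m. Suc m < N \<longrightarrow> phi (pi * th (Suc m)) \<le> phi (pi * th m))"
  proof (cases "\<beta> > 0")
    case True
    have pos: "0 < pi * th m" for m unfolding th_def using True by simp
    have "phi (pi * th (Suc m)) \<le> phi (pi * th m)" if "Suc m < N" for m
    proof (rule phi_anti_pos)
      show "0 < pi * th m" by (rule pos)
      show "pi * th m \<le> pi * th (Suc m)" unfolding th_def using True by simp
      show "pi * th (Suc m) < pi" using thb[of "Suc m"] that pos[of "Suc m"] pi_gt_zero by auto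
    qed
    thus ?thesis by blast
  next
    case False
    hence bn: "\<beta> < 0" using b0 by simp
    have neg: "pi * th m < 0" for m
    proof -
      have "\<beta> * (2 * real m + 1) < 0" using bn by (intro mult_neg_pos) auto
      from mult_pos_neg[OF pi_gt_zero this] show ?thesis unfolding th_def .
    qed
    have "phi (pi * th m) \<le> phi (pi * th (Suc m))" if "Suc m < N" for m
    proof (rule phi_anti_neg)
      show "pi * th m < 0" by (rule neg)
      show "pi * th (Suc m) \<le> pi * th m" unfolding th_def using False by (simp add: mult_left_mono_neg)
      show "- pi < pi * th (Suc m)" using thb[of "Suc m"] that neg[of "Suc m"] pi_gt_zero by auto
    qed
    thus ?thesis by blast
  qed
  have "(\<Sum>m<N. h m) - (\<Sum>m<N. (h (Suc m) - h m) / (2 * of_real pi * \<i> * of_real (th m)))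
     = (\<Sum>m<N. (h (Suc m) - h m) * (- 1/2 - \<i>/2 * of_real (phi (pi * th m))))"
    unfolding sum_subtractf[symmetric] by (intro sum.cong refl key) simp
  also have "norm \<dots> \<le> 1 + 2 * 1"
    by (rule abel_bound) (use mono thb thnz phi_bound in \<open>auto simp: h_def\<close>)
  finally show ?thesis unfolding h_def th_def by simp
qed


lemma cont_e: "continuous_on U (\<lambda>x. e (f x))" if "continuous_on U f"
  unfolding e_def using that by (intro continuous_intros) auto

lemma vd_e_lin: "((\<lambda>x. e (a + t * x)) has_vector_derivative (2 * of_real pi * \<i> * of_real t * e (a + t * x))) (at x within U)"
proof -
  define F where "F z = exp (2 * of_real pi * \<i> * (of_real a + of_real t * z))" for z
  have "(F has_field_derivative (F (of_real x) * (2 * of_real pi * \<i> * of_real t))) (at (of_real x))"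
    unfolding F_def by (auto intro!: derivative_eq_intros simp: algebra_simps)
  from has_vector_derivative_real_field[OF this]
  have "((\<lambda>x. F (of_real x)) has_vector_derivative (F (of_real x) * (2 * of_real pi * \<i> * of_real t))) (at x within U)" .
  moreover have "F (of_real y) = e (a + t * y)" for y unfolding F_def e_def by (simp add: algebra_simps)
  ultimately show ?thesis by (simp add: ac_simps)
qed

lemma int_lin:
  assumes "t \<noteq> 0" "u \<le> v"
  shows "((\<lambda>x. e (a + t * x)) has_integral (e (a + t * v) - e (a + t * u)) / (2 * of_real pi * \<i> * of_real t)) {u..v}"
proof -
  have "((\<lambda>x. (2 * of_real pi * \<i> * of_real t * e (a + t * x)) / (2 * of_real pi * \<i> * of_real t)) has_integral
       (e (a + t * v) / (2 * of_real pi * \<i> * of_real t) - e (a + t * u) / (2 * of_real pi * \<i> * of_real t))) {u..v}"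
    by (rule fundamental_theorem_of_calculus[OF assms(2)])
       (auto intro!: derivative_eq_intros vd_e_lin)
  thus ?thesis using assms(1) by (simp add: diff_divide_distrib)
qed

lemma norm_e_minus_1: "norm (e d - 1) \<le> 2 * pi * \<bar>d\<bar>"
proof -
  have "norm (e d - 1) = 2 * \<bar>sin (2*pi*d / 2)\<bar>" unfolding e_alt by (rule dist_exp_i_1)
  also have "\<dots> \<le> 2 * \<bar>2*pi*d/2\<bar>" using abs_sin_x_le_abs_x by simp
  finally show ?thesis by (simp add: abs_mult)
qed

lemma piece:
  fixes \<beta> :: real and m :: nat
  assumes "\<beta> \<noteq> 0"
  shows "norm (integral {real m..real m + 1} (\<lambda>x. e (\<beta> * x^2)) -
     (e (\<beta> * (real (Suc m))^2) - e (\<beta> * (real m)^2)) / (2 * of_real pi * \<i> * of_real (\<beta> * (2 * real m + 1)))) \<le> 2 * \<bar>\<beta>\<bar>"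
proof -
  define t where "t = \<beta> * (2 * real m + 1)"
  define a where "a = \<beta> * (real m)^2 - t * real m"
  have t0: "t \<noteq> 0" unfolding t_def using assms by (simp add: add_nonneg_pos)
  have il: "((\<lambda>x. e (a + t * x)) has_integral (e (\<beta> * (real (Suc m))^2) - e (\<beta> * (real m)^2)) / (2 * of_real pi * \<i> * of_real t)) {real m..real m + 1}"
  proof -
    have "a + t * (real m + 1) = \<beta> * (real (Suc m))^2" "a + t * real m = \<beta> * (real m)^2"
      unfolding a_def t_def by (simp_all add: algebra_simps power2_eq_square)
    thus ?thesis using int_lin[OF t0, of "real m" "real m + 1" a] by simp
  qed
  have c1: "continuous_on {real m..real m + 1} (\<lambda>x. e (\<beta> * x^2))" by (intro cont_e continuous_intros)
  have c2: "continuous_on {real m..real m + 1} (\<lambda>x. e (a + t * x))" by (intro cont_e continuous_intros)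
  have "integral {real m..real m + 1} (\<lambda>x. e (\<beta> * x^2)) - (e (\<beta> * (real (Suc m))^2) - e (\<beta> * (real m)^2)) / (2 * of_real pi * \<i> * of_real t)
      = integral {real m..real m + 1} (\<lambda>x. e (\<beta> * x^2) - e (a + t * x))"
    using il c1 c2 by (simp add: integral_diff integrable_continuous_interval integral_unique)
  also have "norm \<dots> \<le> 2 * \<bar>\<beta>\<bar> * (real m + 1 - real m)"
  proof (rule integral_bound)
    show "continuous_on {real m..real m + 1} (\<lambda>x. e (\<beta> * x^2) - e (a + t * x))"
      using c1 c2 by (intro continuous_intros)
    fix x assume x: "x \<in> {real m..real m + 1}"
    define d where "d = \<beta> * (x - real m) * (x - real m - 1)"
    have "\<beta> * x^2 = (a + t * x) + d" unfolding d_def a_def t_def by (simp add: algebra_simps power2_eq_square)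
    hence "e (\<beta> * x^2) - e (a + t * x) = e (a + t * x) * (e d - 1)" by (simp add: e_add algebra_simps)
    hence "norm (e (\<beta> * x^2) - e (a + t * x)) = norm (e d - 1)" by (simp add: norm_mult)
    also have "\<dots> \<le> 2 * pi * \<bar>d\<bar>" by (rule norm_e_minus_1)
    also have "\<bar>d\<bar> \<le> \<bar>\<beta>\<bar> / 4"
    proof -
      have "\<bar>(x - real m) * (x - real m - 1)\<bar> \<le> 1/4"
      proof -
        have "(x - real m) * (x - real m - 1) \<le> 0" using x by (simp add: mult_nonneg_nonpos)
        moreover have "- ((x - real m) * (x - real m - 1)) \<le> 1/4"
        proof -
          have "0 \<le> (x - real m - 1/2)^2" by simp
          thus ?thesis by (simp add: power2_eq_square algebra_simps)
        qed
        ultimately show ?thesis by linarith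
      qed
      hence "\<bar>\<beta>\<bar> * \<bar>(x - real m) * (x - real m - 1)\<bar> \<le> \<bar>\<beta>\<bar> * (1/4)" by (intro mult_left_mono) auto
      thus ?thesis unfolding d_def by (simp add: abs_mult mult.assoc)
    qed
    hence "2 * pi * \<bar>d\<bar> \<le> 2 * pi * (\<bar>\<beta>\<bar> / 4)" by (intro mult_left_mono) auto
    also have "\<dots> \<le> 2 * \<bar>\<beta>\<bar>" using mult_right_mono[of pi 4 "\<bar>\<beta>\<bar>"] pi_less_4 by (simp add: field_simps)
    finally show "norm (e (\<beta> * x^2) - e (a + t * x)) \<le> 2 * \<bar>\<beta>\<bar>" by linarith
  qed simp
  finally show ?thesis unfolding t_def by simp
qed

lemma integral_split_nat:
  fixes f :: "real \<Rightarrow> complex"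
  assumes "continuous_on {0..real N} f"
  shows "integral {0..real N} f = (\<Sum>m<N. integral {real m..real m + 1} f)"
  using assms
proof (induction N)
  case 0 then show ?case by simp
next
  case (Suc N)
  have c: "continuous_on {0..real N} f" using Suc.prems by (rule continuous_on_subset) auto
  have "integral {0..real N} f + integral {real N..real N + 1} f = integral {0..real N + 1} f"
  proof (rule Henstock_Kurzweil_Integration.integral_combine)
    show "f integrable_on {0..real N + 1}"
      using Suc.prems by (intro integrable_continuous_interval) (simp add: add.commute)
  qed auto
  thus ?case using Suc.IH[OF c] by (simp add: add.commute)
qed


lemma sum_shift1:
  fixes h :: "nat \<Rightarrow> complex"
  shows "(\<Sum>m\<in>{1..N}. h m) = (\<Sum>m<N. h m) - h 0 + h N"
  by (induction N) (auto simp: atLeastAtMostSuc_conv)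

lemma mainB:
  fixes X \<beta> :: real and N :: nat
  assumes X: "X \<ge> 1" and N: "N = nat \<lfloor>X\<rfloor>" and small: "2 * real N * \<bar>\<beta>\<bar> \<le> 1/2"
  shows "norm ((\<Sum>m\<in>{1..N}. e (\<beta> * (real m)^2)) - integral {0..X} (\<lambda>x. e (\<beta> * x^2))) \<le> 7"
proof -
  have NX: "real N \<le> X" "X < real N + 1" using X N by linarith+
  show ?thesis
  proof (cases "\<beta> = 0")
    case True
    have e0: "e 0 = 1" using e_int[of 0] by simp
    have "(\<Sum>m\<in>{1..N}. e (\<beta> * (real m)^2)) - integral {0..X} (\<lambda>x. e (\<beta> * x^2)) = of_real (real N - X)"
      using True X by (simp add: e0 scaleR_conv_of_real)
    moreover have "norm (complex_of_real (real N - X)) = \<bar>real N - X\<bar>" by (rule norm_of_real)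
    ultimately show ?thesis using NX by (simp only:)
  next
    case False
    define h where "h m = e (\<beta> * (real m)^2)" for m
    define Dm where "Dm m = (e (\<beta> * (real (Suc m))^2) - e (\<beta> * (real m)^2)) / (2 * of_real pi * \<i> * of_real (\<beta> * (2 * real m + 1)))" for m
    define H where "H x = e (\<beta> * x^2)" for x
    have cH: "continuous_on U H" for U unfolding H_def by (intro cont_e continuous_intros)
    have a1: "norm ((\<Sum>m<N. h m) - (\<Sum>m<N. Dm m)) \<le> 3"
      unfolding h_def Dm_def by (rule sumB[OF False small])
    have "norm ((\<Sum>m<N. Dm m) - integral {0..real N} H) = norm (\<Sum>m<N. Dm m - integral {real m..real m+1} H)"
      using integral_split_nat[OF cH] by (simp add: sum_subtractf)
    also have "\<dots> \<le> (\<Sum>m<N. norm (Dm m - integral {real m..real m+1} H))" by (rule norm_sum)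
    also have "\<dots> \<le> (\<Sum>m<N. 2 * \<bar>\<beta>\<bar>)"
    proof (intro sum_mono)
      fix m
      show "norm (Dm m - integral {real m..real m+1} H) \<le> 2 * \<bar>\<beta>\<bar>"
        using piece[OF False, of m] unfolding Dm_def H_def by (simp add: norm_minus_commute)
    qed
    also have "\<dots> = 2 * real N * \<bar>\<beta>\<bar>" by simp
    finally have a2: "norm ((\<Sum>m<N. Dm m) - integral {0..real N} H) \<le> 1/2" using small by linarith
    have comb: "integral {0..real N} H + integral {real N..X} H = integral {0..X} H"
      using NX by (intro Henstock_Kurzweil_Integration.integral_combine integrable_continuous_interval cH) auto
    have a3: "norm (integral {real N..X} H) \<le> 1"
    proof -
      have "norm (integral {real N..X} H) \<le> 1 * (X - real N)"
        using NX by (intro integral_bound cH) (auto simp: H_def)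
      thus ?thesis using NX by simp
    qed
    have a4: "norm (h N) \<le> 1" "norm (h 0) \<le> 1" unfolding h_def by simp_all
    have "(\<Sum>m\<in>{1..N}. h m) - integral {0..X} H
       = ((\<Sum>m<N. h m) - (\<Sum>m<N. Dm m)) + ((\<Sum>m<N. Dm m) - integral {0..real N} H) - h 0 + h N - integral {real N..X} H"
      unfolding sum_shift1 comb[symmetric] by simp
    also have "norm \<dots> \<le> 3 + 1/2 + 1 + 1 + 1"
      using a1 a2 a3 a4 norm_triangle_ineq norm_triangle_ineq4
      by (smt (verit, best))
    finally show ?thesis unfolding h_def H_def by simp
  qed
qed


lemma harm_int:
  fixes n :: nat assumes "n \<ge> 1"
  shows "(\<Sum>b\<in>{1..int n}. 1 / real_of_int b) \<le> 1 + ln (real n)"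
  using assms
proof (induction n rule: dec_induct)
  case base then show ?case by simp
next
  case (step n)
  have set: "{1..int (Suc n)} = insert (int n + 1) {1..int n}" by auto
  have "(\<Sum>b\<in>{1..int (Suc n)}. 1 / real_of_int b) = (\<Sum>b\<in>{1..int n}. 1 / real_of_int b) + 1 / (real n + 1)"
    unfolding set by (subst sum.insert) auto
  also have "\<dots> \<le> 1 + ln (real n) + 1 / (real n + 1)" using step.IH by simp
  also have "\<dots> \<le> 1 + ln (real (Suc n))"
  proof -
    have n0: "real n > 0" using step by simp
    have "ln (real n / (real n + 1)) \<le> real n / (real n + 1) - 1" using n0 by (intro ln_le_minus_one) auto
    moreover have "ln (real n / (real n + 1)) = ln (real n) - ln (real n + 1)" using n0 by (simp add: ln_div)
    moreover have "real n / (real n + 1) - 1 = - (1 / (real n + 1))" using n0 by (simp add: field_simps)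
    moreover have "real (Suc n) = real n + 1" by simp
    ultimately show ?thesis by (simp only:)
  qed
  finally show ?case .
qed

lemma harm_int_q:
  fixes q :: int assumes "q \<ge> 1"
  shows "(\<Sum>b\<in>{1..q-1}. 1 / real_of_int b) \<le> 1 + ln (real_of_int q)"
proof (cases "q = 1")
  case True then show ?thesis by simp
next
  case False
  hence "nat (q-1) \<ge> 1" using assms by simp
  from harm_int[OF this] have "(\<Sum>b\<in>{1..q-1}. 1 / real_of_int b) \<le> 1 + ln (real_of_int (q-1))"
    using assms by simp
  also have "\<dots> \<le> 1 + ln (real_of_int q)" using False assms by simp
  finally show ?thesis .
qed

lemma refl_sum:
  fixes q :: int
  shows "(\<Sum>b\<in>{1..q-1}. 1 / real_of_int (q - b)) = (\<Sum>b\<in>{1..q-1}. 1 / real_of_int b)"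
  by (rule sum.reindex_bij_witness[of _ "\<lambda>b. q - b" "\<lambda>b. q - b"]) auto

lemma harm_min:
  fixes q :: int assumes "q \<ge> 1"
  shows "(\<Sum>b\<in>{1..q-1}. 1 / real_of_int (min b (q - b))) \<le> 2 * (1 + ln (real_of_int q))"
proof -
  have "(\<Sum>b\<in>{1..q-1}. 1 / real_of_int (min b (q - b))) \<le> (\<Sum>b\<in>{1..q-1}. 1 / real_of_int b + 1 / real_of_int (q - b))"
  proof (intro sum_mono)
    fix b assume b: "b \<in> {1..q-1}"
    show "1 / real_of_int (min b (q - b)) \<le> 1 / real_of_int b + 1 / real_of_int (q - b)"
      using b by (cases "b \<le> q - b") (auto simp: min_def)
  qed
  also have "\<dots> = 2 * (\<Sum>b\<in>{1..q-1}. 1 / real_of_int b)"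
    using refl_sum[of q] by (simp only: sum.distrib)
  also have "\<dots> \<le> 2 * (1 + ln (real_of_int q))" using harm_int_q[OF assms] by simp
  finally show ?thesis .
qed

lemma sum_int_nat:
  fixes g :: "int \<Rightarrow> complex" and X :: real assumes "X \<ge> 0"
  shows "(\<Sum>m\<in>{1..\<lfloor>X\<rfloor>}. g m) = (\<Sum>n\<in>{1..nat \<lfloor>X\<rfloor>}. g (int n))"
proof -
  have "{1..\<lfloor>X\<rfloor>} = int ` {1..nat \<lfloor>X\<rfloor>}"
    apply (auto simp: image_iff)
    subgoal for x by (rule bexI[of _ "nat x"]) auto
    done
  thus ?thesis by (simp add: sum.reindex)
qed


theorem lemma4p1:
  shows "\<exists>C X0. \<forall>X::real. X \<ge> X0 \<longrightarrow>
    (\<forall>(q::int) (\<beta>::real). 1 \<le> q \<and> q \<le> \<lfloor>5 * X\<rfloor> \<and>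
        \<bar>\<beta>\<bar> \<le> 1 / (of_int q * of_int \<lfloor>5 * X\<rfloor>) \<longrightarrow>
      (\<exists>E :: int \<Rightarrow> complex.
         (\<Sum>b\<in>brange q. norm (E b)) \<le> C * ln (of_int q + 2) \<and>
         (\<forall>a::int. coprime a q \<longrightarrow>
            weylf X (of_int a / of_int q + \<beta>) =
              S q a 0 / of_int q * integral {0..X} (\<lambda>x. e (x^2 * \<beta>))
              + (\<Sum>b\<in>brange q. S q a b * E b))))"
proof (rule exI[of _ 23], rule exI[of _ 1], intro allI impI)
  fix X :: real and q :: int and \<beta> :: real
  assume X: "1 \<le> X"
  assume "1 \<le> q \<and> q \<le> \<lfloor>5 * X\<rfloor> \<and> \<bar>\<beta>\<bar> \<le> 1 / (of_int q * of_int \<lfloor>5 * X\<rfloor>)"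
  hence q: "1 \<le> q" and bet: "\<bar>\<beta>\<bar> \<le> 1 / (of_int q * of_int \<lfloor>5 * X\<rfloor>)" by auto
  define N where "N = nat \<lfloor>X\<rfloor>"
  define Q where "Q = (of_int q :: real)"
  have Q1: "Q \<ge> 1" using q unfolding Q_def by simp
  have fl: "1 \<le> \<lfloor>X\<rfloor>" using X by (simp add: le_floor_iff)
  have rN: "real N = of_int \<lfloor>X\<rfloor>" unfolding N_def using fl by simp
  have NX: "real N \<le> X" "1 \<le> real N" unfolding rN using fl by (simp_all add: of_int_floor_le)
  have P: "4 * real N \<le> of_int \<lfloor>5 * X\<rfloor>" using NX X by linarith
  have small1: "2 * real N * \<bar>\<beta>\<bar> \<le> 1 / (2 * Q)"
  proof -
    have pp: "0 < Q * of_int \<lfloor>5 * X\<rfloor>" using Q1 P NX by (intro mult_pos_pos) auto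
    have "2 * real N * \<bar>\<beta>\<bar> \<le> 2 * real N * (1 / (Q * of_int \<lfloor>5 * X\<rfloor>))"
      using bet unfolding Q_def by (intro mult_left_mono) auto
    also have "\<dots> = 2 * real N / (Q * of_int \<lfloor>5 * X\<rfloor>)" by simp
    also have "\<dots> \<le> 2 * real N / (Q * (4 * real N))"
      using pp P Q1 NX by (intro divide_left_mono mult_left_mono mult_pos_pos) auto
    also have "\<dots> = 1 / (2 * Q)" using NX by (simp add: field_simps)
    finally show ?thesis .
  qed
  have small2: "2 * real N * \<bar>\<beta>\<bar> \<le> 1 / 2"
  proof -
    have "1 / (2 * Q) \<le> 1 / 2" using Q1 by (simp add: field_simps)
    thus ?thesis using small1 by linarith
  qed
  define I where "I = integral {0..X} (\<lambda>x. e (x^2 * \<beta>))"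
  define F where "F b = (1 / of_int q) * (\<Sum>m\<in>{1..\<lfloor>X\<rfloor>}. e (of_int (m^2) * \<beta> - of_int (b*m) / of_int q))" for b :: int
  define E where "E b = (if 0 \<le> b \<and> b \<le> q - 1 then (if b = 0 then F 0 - I / of_int q else F b) else 0)" for b
  have sub: "{0..q-1} \<subseteq> brange q" unfolding brange_def using q by auto
  have finb: "finite (brange q)"
  proof -
    have "brange q \<subseteq> {-2*q..2*q}" unfolding brange_def by auto
    thus ?thesis by (rule finite_subset) simp
  qed
  have Eout: "E b = 0" if "b \<in> brange q - {0..q-1}" for b using that unfolding E_def by auto
  show "\<exists>E. (\<Sum>b\<in>brange q. norm (E b)) \<le> 23 * ln (of_int q + 2) \<and>
         (\<forall>a. coprime a q \<longrightarrow> weylf X (of_int a / of_int q + \<beta>) =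
              S q a 0 / of_int q * integral {0..X} (\<lambda>x. e (x^2 * \<beta>)) + (\<Sum>b\<in>brange q. S q a b * E b))"
  proof (intro exI conjI allI impI)
    fix a :: int
    have "(\<Sum>b\<in>brange q. S q a b * E b) = (\<Sum>b\<in>{0..q-1}. S q a b * E b)"
      using sub finb Eout by (intro sum.mono_neutral_right) auto
    also have "\<dots> = (\<Sum>b\<in>{0..q-1}. S q a b * F b - (if b = 0 then S q a 0 * I / of_int q else 0))"
      unfolding E_def by (intro sum.cong refl) (auto simp: algebra_simps)
    also have "\<dots> = (\<Sum>b\<in>{0..q-1}. S q a b * F b) - S q a 0 * I / of_int q"
      using q by (simp add: sum_subtractf)
    finally have r: "(\<Sum>b\<in>brange q. S q a b * E b) = (\<Sum>b\<in>{0..q-1}. S q a b * F b) - S q a 0 * I / of_int q" .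
    have "weylf X (of_int a / of_int q + \<beta>) = (\<Sum>m\<in>{1..\<lfloor>X\<rfloor>}. e (of_int (a*m^2) / of_int q) * e (of_int (m^2) * \<beta>))"
      unfolding weylf_def by (intro sum.cong refl) (simp add: algebra_simps flip: e_add)
    also have "\<dots> = (\<Sum>m\<in>{1..\<lfloor>X\<rfloor>}. (1 / of_int q) * (\<Sum>b\<in>{0..q-1}. S q a b * e (- of_int (b*m) / of_int q)) * e (of_int (m^2) * \<beta>))"
    proof (intro sum.cong refl)
      fix m
      have qz: "complex_of_int q \<noteq> 0" using q by simp
      have "e (of_int (a*m^2) / of_int q) = (1 / of_int q) * (\<Sum>b\<in>{0..q-1}. S q a b * e (- of_int (b*m) / of_int q))"
        unfolding fourier[OF q, of a m] using qz by simp
      thus "e (of_int (a*m^2) / of_int q) * e (of_int (m^2) * \<beta>) = (1 / of_int q) * (\<Sum>b\<in>{0..q-1}. S q a b * e (- of_int (b*m) / of_int q)) * e (of_int (m^2) * \<beta>)"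
        by simp
    qed
    also have "\<dots> = (\<Sum>b\<in>{0..q-1}. S q a b * F b)"
      unfolding F_def sum_distrib_left sum_distrib_right
      by (subst sum.swap) (intro sum.cong refl, simp add: e_add[symmetric] algebra_simps diff_divide_distrib)
    finally show "weylf X (of_int a / of_int q + \<beta>) =
              S q a 0 / of_int q * integral {0..X} (\<lambda>x. e (x^2 * \<beta>)) + (\<Sum>b\<in>brange q. S q a b * E b)"
      unfolding r I_def by simp
  next
    show "(\<Sum>b\<in>brange q. norm (E b)) \<le> 23 * ln (of_int q + 2)"
    proof -
      have qz: "Q > 0" using Q1 by simp
      have nE0: "norm (E 0) \<le> 7"
      proof -
        have "(\<Sum>m\<in>{1..\<lfloor>X\<rfloor>}. e (of_int (m^2) * \<beta> - of_int (0*m) / of_int q)) = (\<Sum>n\<in>{1..N}. e (\<beta> * (real n)^2))"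
          unfolding N_def using X by (subst sum_int_nat) (auto simp: ac_simps)
        moreover have "I = integral {0..X} (\<lambda>x. e (\<beta> * x^2))" unfolding I_def by (simp add: ac_simps)
        ultimately have "E 0 = (1 / of_int q) * ((\<Sum>n\<in>{1..N}. e (\<beta> * (real n)^2)) - integral {0..X} (\<lambda>x. e (\<beta> * x^2)))"
          unfolding E_def F_def using q by (simp add: field_simps)
        hence "norm (E 0) = (1 / Q) * norm ((\<Sum>n\<in>{1..N}. e (\<beta> * (real n)^2)) - integral {0..X} (\<lambda>x. e (\<beta> * x^2)))"
          unfolding Q_def using q by (simp add: norm_mult norm_divide)
        also have "\<dots> \<le> 1 * 7"
          using mainB[OF X N_def small2] Q1 by (intro mult_mono) auto
        finally show ?thesis by simp
      qed
      have nF: "norm (F b) \<le> 4 * (1 / real_of_int (min b (q - b)))" if b: "b \<in> {1..q-1}" for b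
      proof -
        define M where "M = real_of_int (min b (q - b))"
        have "2 * min b (q - b) \<le> q" by (simp add: min_def)
        hence M1: "1 \<le> M" "2 * M \<le> Q" using b unfolding M_def Q_def by (auto simp del: of_int_min)
        define h where "h n = e (\<beta> * (real n)^2 - of_int b * real n / of_int q)" for n
        have "(\<Sum>m\<in>{1..\<lfloor>X\<rfloor>}. e (of_int (m^2) * \<beta> - of_int (b*m) / of_int q)) = (\<Sum>n\<in>{1..N}. h n)"
          unfolding N_def h_def using X by (subst sum_int_nat) (auto simp: ac_simps)
        also have "\<dots> = (\<Sum>n<N. h n) - h 0 + h N" by (rule sum_shift1)
        finally have eq: "F b = (1 / of_int q) * ((\<Sum>n<N. h n) - h 0 + h N)" unfolding F_def by simp
        have t1: "norm ((\<Sum>n<N. h n) - h 0 + h N) \<le> norm ((\<Sum>n<N. h n) - h 0) + norm (h N)"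
          by (rule norm_triangle_ineq)
        have t2: "norm ((\<Sum>n<N. h n) - h 0) \<le> norm (\<Sum>n<N. h n) + norm (h 0)"
          by (rule norm_triangle_ineq4)
        have t3: "norm (\<Sum>n<N. h n) \<le> 1 + 2 * (Q / M)"
        proof -
          have "1 \<le> b" "b \<le> q - 1" using b by auto
          from sumA[OF this small1[unfolded Q_def]] show ?thesis unfolding h_def Q_def M_def .
        qed
        have t4: "norm (h 0) = 1" "norm (h N) = 1" unfolding h_def by simp_all
        have "2 \<le> Q / M" using M1 by (simp add: field_simps)
        hence n1: "norm ((\<Sum>n<N. h n) - h 0 + h N) \<le> 4 * (Q / M)"
          using t1 t2 t3 t4 by linarith
        have "norm (F b) = (1/Q) * norm ((\<Sum>n<N. h n) - h 0 + h N)"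
          unfolding eq Q_def using q by (simp add: norm_mult norm_divide)
        also have "\<dots> \<le> (1/Q) * (4 * (Q / M))" using n1 qz by (intro mult_left_mono) auto
        also have "\<dots> = 4 * (1 / M)" using qz M1 by (simp add: field_simps)
        finally show ?thesis unfolding M_def .
      qed
      have "(\<Sum>b\<in>brange q. norm (E b)) = (\<Sum>b\<in>{0..q-1}. norm (E b))"
        using sub finb Eout by (intro sum.mono_neutral_right) auto
      also have "{0..q-1} = insert 0 {1..q-1}" using q by auto
      also have "(\<Sum>b\<in>insert 0 {1..q-1}. norm (E b)) = norm (E 0) + (\<Sum>b\<in>{1..q-1}. norm (F b))"
      proof -
        have "(\<Sum>b\<in>{1..q-1}. norm (E b)) = (\<Sum>b\<in>{1..q-1}. norm (F b))"
          by (rule sum.cong) (auto simp: E_def)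
        thus ?thesis by (subst sum.insert) auto
      qed
      also have "\<dots> \<le> 7 + (\<Sum>b\<in>{1..q-1}. 4 * (1 / real_of_int (min b (q - b))))"
        using nE0 nF by (intro add_mono sum_mono) auto
      also have "\<dots> = 7 + 4 * (\<Sum>b\<in>{1..q-1}. 1 / real_of_int (min b (q - b)))"
        by (simp add: sum_distrib_left)
      also have "\<dots> \<le> 7 + 4 * (2 * (1 + ln Q))"
        using harm_min[OF q] unfolding Q_def by simp
      also have "\<dots> \<le> 23 * ln (of_int q + 2)"
      proof -
        have "ln Q \<le> ln (Q + 2)" using qz by simp
        moreover have "1 \<le> ln (Q + 2)"
        proof -
          have "exp 1 \<le> Q + 2" using exp_le Q1 by linarith
          thus ?thesis using qz by (subst ln_ge_iff) auto
        qed
        moreover have "7 + 4 * (2 * (1 + ln Q)) = 15 + 8 * ln Q" by (simp add: algebra_simps)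
        moreover have "ln (Q + 2) = ln (of_int q + 2)" by (simp add: Q_def)
        ultimately show ?thesis by linarith
      qed
      finally show ?thesis .
    qed
  qed
qed

end
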